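(* Let $\mathbb F\subseteq\mathbb R$ be a subfield and $X\subseteq\mathbb F^n$ nonempty such that $\operatorname{conv}_{\mathbb R}(X)$ is a polyhedron. Then a nonempty subset $Y\subseteq X$ is a weak $\mathbb F$-face of $X$ if and only if $Y=\mathcal F\cap X$ for some face $\mathcal F$ of $\operatorname{conv}_{\mathbb R}(X)$. Moreover, in this case $\operatorname{conv}_{\mathbb R}(Y)=\mathcal F$.
   Context: For a subfield $\mathbb K\subseteq\mathbb R$ and $X\subseteq\mathbb R^n$: $\operatorname{conv}_{\mathbb K}(X)$ is the set of finite combinations $\sum r_sx_s$ with $x_s\in X$, $r_s\in\mathbb K\cap[0,\infty)$, $\sum r_s=1$; for $Y=\operatorname{conv}_{\mathbb K}(X)$, $\operatorname{relint}_{\mathbb K}(Y)=\{x\in Y:\forall y\in Y\ \exists z\in Y,\ t\in\mathbb K\cap(0,1),\ x=ty+(1-t)z\}$. $Y\subseteq X$ is a weak $\mathbb F$-face of $X$ if for every $U\subseteq X$, $\operatorname{conv}_{\mathbb F}(Y)\cap\operatorname{relint}_{\mathbb F}(\operatorname{conv}_{\mathbb F}(U))\ne\emptyset$ implies $U\subseteq Y$. A polyhedron is a finite intersection of closed affine half-spaces. A face of $\mathcal P\subseteq\mathbb R^n$ is $\mathcal P$ or $\mathcal P\cap H(v,w)$ where $H(v,w)=\{u:v\cdot(u-w)=0\}$, $\mathcal P\subseteq\{u:v\cdot(u-w)\ge0\}$, $\mathcal P\cap H(v,w)\ne\emptyset$. *)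

theory Defs
  imports "HOL-Analysis.Analysis"
begin

definition real_subfield :: "real set \<Rightarrow> bool" where
  "real_subfield K \<longleftrightarrow> 0 \<in> K \<and> 1 \<in> K \<and>
     (\<forall>a\<in>K. \<forall>b\<in>K. a + b \<in> K \<and> a * b \<in> K) \<and>
     (\<forall>a\<in>K. - a \<in> K) \<and> (\<forall>a\<in>K. a \<noteq> 0 \<longrightarrow> inverse a \<in> K)"

definition conv_K :: "real set \<Rightarrow> 'a::real_vector set \<Rightarrow> 'a set" where
  "conv_K K X = {y. \<exists>S r. finite S \<and> S \<subseteq> X \<and> (\<forall>s\<in>S. r s \<in> K \<and> 0 \<le> r s) \<and>
      sum r S = 1 \<and> (\<Sum>s\<in>S. r s *\<^sub>R s) = y}"

definition relint_K :: "real set \<Rightarrow> 'a::real_vector set \<Rightarrow> 'a set" where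
  "relint_K K Y = {x \<in> Y. \<forall>y\<in>Y. \<exists>z\<in>Y. \<exists>t\<in>K. 0 < t \<and> t < 1 \<and>
      x = t *\<^sub>R y + (1 - t) *\<^sub>R z}"

definition weak_face :: "real set \<Rightarrow> 'a::real_vector set \<Rightarrow> 'a set \<Rightarrow> bool" where
  "weak_face K X Y \<longleftrightarrow> Y \<subseteq> X \<and>
     (\<forall>U. U \<subseteq> X \<longrightarrow> conv_K K Y \<inter> relint_K K (conv_K K U) \<noteq> {} \<longrightarrow> U \<subseteq> Y)"

definition poly_face :: "'a::real_inner set \<Rightarrow> 'a set \<Rightarrow> bool" where
  "poly_face P Fc \<longleftrightarrow> Fc = P \<or>
     (\<exists>v w. P \<subseteq> {u. v \<bullet> (u - w) \<ge> 0} \<and> Fc = P \<inter> {u. v \<bullet> (u - w) = 0} \<and> Fc \<noteq> {})"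

end

theory Submission
  imports Defs
begin

lemma rsf_sum: assumes "real_subfield F" "\<forall>x\<in>S. f x \<in> F" shows "sum f S \<in> F"
proof (cases "finite S")
  case True then show ?thesis using assms(2)
  proof (induction S rule: finite_induct)
    case empty then show ?case using assms(1) by (simp add: real_subfield_def)
  next
    case (insert x S) then show ?case using assms(1) by (simp add: real_subfield_def)
  qed
next
  case False then show ?thesis using assms(1) by (simp add: real_subfield_def)
qed

lemma rsf_add: "real_subfield F \<Longrightarrow> a \<in> F \<Longrightarrow> b \<in> F \<Longrightarrow> a + b \<in> F"
  by (simp add: real_subfield_def)
lemma rsf_mult: "real_subfield F \<Longrightarrow> a \<in> F \<Longrightarrow> b \<in> F \<Longrightarrow> a * b \<in> F"
  by (simp add: real_subfield_def)
lemma rsf_minus: "real_subfield F \<Longrightarrow> a \<in> F \<Longrightarrow> - a \<in> F"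
  by (simp add: real_subfield_def)
lemma rsf_diff: "real_subfield F \<Longrightarrow> a \<in> F \<Longrightarrow> b \<in> F \<Longrightarrow> a - b \<in> F"
  using rsf_add[of F a "-b"] rsf_minus by auto
lemma rsf_inverse: "real_subfield F \<Longrightarrow> a \<in> F \<Longrightarrow> inverse a \<in> F"
  by (cases "a = 0") (auto simp: real_subfield_def)
lemma rsf_divide: "real_subfield F \<Longrightarrow> a \<in> F \<Longrightarrow> b \<in> F \<Longrightarrow> a / b \<in> F"
  by (simp add: divide_inverse rsf_mult rsf_inverse)
lemma rsf_nat: "real_subfield F \<Longrightarrow> real n \<in> F"
  by (induction n) (auto simp: real_subfield_def)

lemma ball_image_pair: "(\<And>a b. (a,b)\<in>E \<Longrightarrow> P (g (a,b))) \<Longrightarrow> \<forall>e\<in>g`E. P e" by auto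

lemma elim_unique:
  fixes V :: "'v set" and E :: "(('v \<Rightarrow> real) \<times> real) set"
  assumes F: "real_subfield F" and "finite V"
    and coef: "\<forall>(a,b)\<in>E. b \<in> F \<and> (\<forall>k\<in>V. a k \<in> F)"
    and sol: "\<forall>(a,b)\<in>E. (\<Sum>k\<in>V. a k * l k) = b"
    and uniq: "\<forall>m. (\<forall>(a,b)\<in>E. (\<Sum>k\<in>V. a k * m k) = b) \<longrightarrow> (\<forall>k\<in>V. m k = l k)"
  shows "\<forall>k\<in>V. l k \<in> F"
  using \<open>finite V\<close> coef sol uniq
proof (induction V arbitrary: E rule: finite_induct)
  case empty then show ?case by simp
next
  case (insert j V)
  show ?case
  proof (cases "\<exists>e\<in>E. fst e j \<noteq> 0")
    case True
    then obtain e where e: "e \<in> E" "fst e j \<noteq> 0" by blast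
    obtain a0 b0 where "e = (a0, b0)" by (cases e)
    then have e0: "(a0,b0) \<in> E" "a0 j \<noteq> 0" using e by auto
    define g where "g = (\<lambda>(a::'v\<Rightarrow>real,b::real). (\<lambda>k. a k - (a j / a0 j) * a0 k, b - (a j / a0 j) * b0))"
    define E' where "E' = g ` E"
    have sum_ins: "\<And>f. (\<Sum>k\<in>insert j V. f k) = f j + (\<Sum>k\<in>V. f k)"
      using insert(1,2) by simp
    have e0sol: "a0 j * l j + (\<Sum>k\<in>V. a0 k * l k) = b0"
    proof -
      have "(\<Sum>k\<in>insert j V. a0 k * l k) = b0" using insert.prems(2) e0(1) by auto
      then show ?thesis using insert(1,2) by simp
    qed
    have c1: "\<forall>(a,b)\<in>E'. b \<in> F \<and> (\<forall>k\<in>V. a k \<in> F)"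
      unfolding E'_def
    proof (rule ball_image_pair)
      fix a b assume ab: "(a,b) \<in> E"
      have "b \<in> F" "\<forall>k\<in>insert j V. a k \<in> F" "b0 \<in> F" "\<forall>k\<in>insert j V. a0 k \<in> F"
        using insert.prems(1) ab e0 by fastforce+
      then have "b - a j / a0 j * b0 \<in> F \<and> (\<forall>k\<in>V. a k - a j / a0 j * a0 k \<in> F)"
        using F by (auto intro!: rsf_diff rsf_mult rsf_divide)
      then show "case g (a, b) of (a, b) \<Rightarrow> b \<in> F \<and> (\<forall>k\<in>V. a k \<in> F)" by (simp add: g_def)
    qed
    have c2: "\<forall>(a,b)\<in>E'. (\<Sum>k\<in>V. a k * l k) = b"
      unfolding E'_def
    proof (rule ball_image_pair)
      fix a b assume ab: "(a,b) \<in> E"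
      have "(\<Sum>k\<in>insert j V. a k * l k) = b" using insert.prems(2) ab by auto
      then have "a j * l j + (\<Sum>k\<in>V. a k * l k) = b" using insert(1,2) by simp
      moreover have "(\<Sum>k\<in>V. (a k - a j / a0 j * a0 k) * l k) = (\<Sum>k\<in>V. a k * l k) - a j / a0 j * (\<Sum>k\<in>V. a0 k * l k)"
        by (simp add: left_diff_distrib sum_subtractf sum_distrib_left mult.assoc)
      moreover have "a j / a0 j * (a0 j * l j) = a j * l j" using e0(2) by simp
      ultimately have "(\<Sum>k\<in>V. (a k - a j / a0 j * a0 k) * l k) = b - a j / a0 j * b0"
        using e0sol by (smt (verit, ccfv_threshold) distrib_left)
      then show "case g (a, b) of (a, b) \<Rightarrow> (\<Sum>k\<in>V. a k * l k) = b" by (simp add: g_def)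
    qed
    have c3: "\<forall>m. (\<forall>(a,b)\<in>E'. (\<Sum>k\<in>V. a k * m k) = b) \<longrightarrow> (\<forall>k\<in>V. m k = l k)"
    proof (intro allI impI)
      fix m assume m: "\<forall>(a,b)\<in>E'. (\<Sum>k\<in>V. a k * m k) = b"
      define m' where "m' = m(j := (b0 - (\<Sum>k\<in>V. a0 k * m k)) / a0 j)"
      have mV: "\<And>k. k \<in> V \<Longrightarrow> m' k = m k" using insert(2) m'_def by auto
      have "\<forall>(a,b)\<in>E. (\<Sum>k\<in>insert j V. a k * m' k) = b"
      proof (clarsimp)
        fix a b assume ab: "(a,b) \<in> E"
        have "g (a,b) \<in> E'" using ab by (simp add: E'_def)
        then have "(\<Sum>k\<in>V. (a k - a j / a0 j * a0 k) * m k) = b - a j / a0 j * b0"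
          using m by (auto simp: g_def)
        moreover have "(\<Sum>k\<in>V. (a k - a j / a0 j * a0 k) * m k) = (\<Sum>k\<in>V. a k * m k) - a j / a0 j * (\<Sum>k\<in>V. a0 k * m k)"
          by (simp add: left_diff_distrib sum_subtractf sum_distrib_left mult.assoc)
        ultimately have "(\<Sum>k\<in>V. a k * m k) = b - a j / a0 j * b0 + a j / a0 j * (\<Sum>k\<in>V. a0 k * m k)"
          by simp
        moreover have "(\<Sum>k\<in>V. a k * m' k) = (\<Sum>k\<in>V. a k * m k)"
          using mV by simp
        moreover have "(\<Sum>k\<in>insert j V. a k * m' k) = a j * m' j + (\<Sum>k\<in>V. a k * m' k)"
          by (rule sum_ins)
        moreover have "a j * m' j = a j / a0 j * (b0 - (\<Sum>k\<in>V. a0 k * m k))"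
          unfolding m'_def by simp
        ultimately show "(\<Sum>k\<in>insert j V. a k * m' k) = b"
          by (simp add: algebra_simps)
      qed
      then have "\<forall>k\<in>insert j V. m' k = l k" using insert.prems(3) by blast
      then show "\<forall>k\<in>V. m k = l k" using mV by auto
    qed
    have IH: "\<forall>k\<in>V. l k \<in> F" using insert.IH[OF c1 c2 c3] .
    have "l j = (b0 - (\<Sum>k\<in>V. a0 k * l k)) / a0 j" using e0sol e0(2) by (simp add: field_simps)
    moreover have "b0 \<in> F" "\<forall>k\<in>insert j V. a0 k \<in> F" using insert.prems(1) e0 by fastforce+
    ultimately have "l j \<in> F" using F IH
      by (auto intro!: rsf_diff rsf_divide rsf_sum rsf_mult)
    then show ?thesis using IH by auto
  next
    case False
    define m where "m = l(j := l j + 1)"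
    have "\<forall>(a,b)\<in>E. (\<Sum>k\<in>insert j V. a k * m k) = b"
    proof clarsimp
      fix a b assume ab: "(a,b) \<in> E"
      have "a j = 0" using False ab by force
      have "(\<Sum>k\<in>insert j V. a k * m k) = (\<Sum>k\<in>insert j V. a k * l k)"
        by (rule sum.cong) (auto simp: m_def \<open>a j = 0\<close>)
      then show "(\<Sum>k\<in>insert j V. a k * m k) = b" using insert.prems(2) ab by fastforce
    qed
    then have "m j = l j" using insert.prems(3) by blast
    then show ?thesis by (simp add: m_def)
  qed
qed

lemma reduce_aff:
  fixes S :: "'a::real_vector set"
  assumes "finite S" "x \<in> S" "\<forall>s\<in>S. 0 < l s" "sum l S = 1" "(\<Sum>s\<in>S. l s *\<^sub>R s) = p"
  shows "\<exists>U l'. U \<subseteq> S \<and> x \<in> U \<and> \<not> affine_dependent U \<and> (\<forall>u\<in>U. 0 < l' u) \<and>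
           sum l' U = 1 \<and> (\<Sum>u\<in>U. l' u *\<^sub>R u) = p"
  using assms
proof (induction "card S" arbitrary: S l rule: less_induct)
  case less
  show ?case
  proof (cases "affine_dependent S")
    case False then show ?thesis using less.prems by blast
  next
    case True
    then obtain d where d: "sum d S = 0" "\<exists>v\<in>S. d v \<noteq> 0" "(\<Sum>v\<in>S. d v *\<^sub>R v) = 0"
      using affine_dependent_explicit_finite[OF less.prems(1)] by blast
    define d' where "d' = (if d x > 0 then (\<lambda>v. - d v) else d)"
    have d': "sum d' S = 0" "\<exists>v\<in>S. d' v \<noteq> 0" "(\<Sum>v\<in>S. d' v *\<^sub>R v) = 0" "d' x \<le> 0"
      using d by (auto simp: d'_def sum_negf scaleR_left.sum[symmetric])
    define P where "P = {s\<in>S. 0 < d' s}"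
    have "P \<noteq> {}"
    proof
      assume "P = {}"
      then have "\<forall>s\<in>S. d' s \<le> 0" by (auto simp: P_def not_less)
      moreover have "sum (\<lambda>s. - d' s) S = 0" using d'(1) by (simp add: sum_negf)
      ultimately have "\<forall>s\<in>S. - d' s = 0" using sum_nonneg_eq_0_iff[OF less.prems(1), of "\<lambda>s. - d' s"] by auto
      then have "\<forall>s\<in>S. d' s = 0" by simp
      then show False using d'(2) by auto
    qed
    have finP: "finite P" using less.prems(1) by (simp add: P_def)
    define t where "t = Min ((\<lambda>s. l s / d' s) ` P)"
    obtain s0 where s0: "s0 \<in> P" "t = l s0 / d' s0"
      proof -
      have "t \<in> (\<lambda>s. l s / d' s) ` P" unfolding t_def using finP \<open>P \<noteq> {}\<close> by (intro Min_in) auto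
      then show ?thesis using that by auto
    qed
    have tle: "\<And>s. s \<in> P \<Longrightarrow> t \<le> l s / d' s" unfolding t_def using finP by auto
    have tpos: "t > 0" using s0 less.prems(3) by (auto simp: P_def)
    define l' where "l' = (\<lambda>s. l s - t * d' s)"
    have l'nn: "\<forall>s\<in>S. 0 \<le> l' s"
    proof
      fix s assume s: "s \<in> S"
      show "0 \<le> l' s"
      proof (cases "s \<in> P")
        case True
        then have "t \<le> l s / d' s" "d' s > 0" using tle by (auto simp: P_def)
        then have "t * d' s \<le> l s" by (simp add: pos_le_divide_eq)
        then show ?thesis by (simp add: l'_def)
      next
        case False
        then have "d' s \<le> 0" using s by (auto simp: P_def)
        then show ?thesis using tpos less.prems(3) s unfolding l'_def
          by (smt (verit) mult_nonneg_nonpos)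
      qed
    qed
    have l's0: "l' s0 = 0" using s0 by (auto simp: l'_def P_def)
    have "s0 \<noteq> x" using s0 d'(4) by (auto simp: P_def)
    define S' where "S' = {s\<in>S. 0 < l' s}"
    have S'sub: "S' \<subseteq> S" by (auto simp: S'_def)
    have "s0 \<notin> S'" using l's0 by (auto simp: S'_def)
    moreover have "s0 \<in> S" using s0 by (auto simp: P_def)
    ultimately have "S' \<subset> S" using S'sub by blast
    then have card: "card S' < card S" using less.prems(1) by (simp add: psubset_card_mono)
    have "l' x > 0" using d'(4) tpos less.prems(2,3) unfolding l'_def
      by (smt (verit) mult_nonneg_nonpos)
    then have xS': "x \<in> S'" using less.prems(2) by (auto simp: S'_def)
    have "sum l' S = sum l S - t * sum d' S"
      by (simp add: l'_def sum_subtractf sum_distrib_left)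
    then have sum1: "sum l' S = 1" using less.prems(4) d'(1) by simp
    have "(\<Sum>s\<in>S. l' s *\<^sub>R s) = (\<Sum>s\<in>S. l s *\<^sub>R s) - t *\<^sub>R (\<Sum>s\<in>S. d' s *\<^sub>R s)"
      by (simp add: l'_def scaleR_diff_left sum_subtractf scaleR_right.sum)
    then have sumv: "(\<Sum>s\<in>S. l' s *\<^sub>R s) = p" using less.prems(5) d'(3) by simp
    have z: "\<forall>s\<in>S - S'. l' s = 0" using l'nn by (auto simp: S'_def)
    have "sum l' S' = sum l' S"
      by (rule sum.mono_neutral_left) (use less.prems(1) S'sub z in \<open>auto simp del: scaleR_eq_0_iff\<close>)
    moreover have "(\<Sum>s\<in>S'. l' s *\<^sub>R s) = (\<Sum>s\<in>S. l' s *\<^sub>R s)"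
      by (rule sum.mono_neutral_left) (use less.prems(1) S'sub z in \<open>auto simp del: scaleR_eq_0_iff\<close>)
    ultimately obtain U l'' where "U \<subseteq> S'" "x \<in> U" "\<not> affine_dependent U" "\<forall>u\<in>U. 0 < l'' u"
           "sum l'' U = 1" "(\<Sum>u\<in>U. l'' u *\<^sub>R u) = p"
    proof -
      have fS': "finite S'" using less.prems(1) S'sub finite_subset by blast
      have pos: "\<forall>s\<in>S'. 0 < l' s" by (simp add: S'_def)
      assume e1: "sum l' S' = sum l' S" and e2: "(\<Sum>s\<in>S'. l' s *\<^sub>R s) = (\<Sum>s\<in>S. l' s *\<^sub>R s)"
      show ?thesis using less.hyps[OF card fS' xS' pos] e1 e2 sum1 sumv that by auto
    qed
    then show ?thesis using S'sub by blast
  qed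
qed

lemma rsf_one: "real_subfield F \<Longrightarrow> 1 \<in> F" by (simp add: real_subfield_def)
lemma rsf_zero: "real_subfield F \<Longrightarrow> 0 \<in> F" by (simp add: real_subfield_def)

lemma conv_K_sub: "conv_K K Y \<subseteq> convex hull Y"
  unfolding conv_K_def convex_hull_explicit by blast

lemma conv_K_single: "1 \<in> K \<Longrightarrow> x \<in> U \<Longrightarrow> x \<in> conv_K K U"
  unfolding conv_K_def by (rule CollectI, rule exI[of _ "{x}"], rule exI[of _ "\<lambda>_. 1"]) auto

lemma relint_lemma:
  fixes U :: "'a::real_vector set"
  assumes F: "real_subfield F" and fin: "finite U" and ne: "U \<noteq> {}"
    and lpos: "\<forall>u\<in>U. 0 < l u" and lF: "\<forall>u\<in>U. l u \<in> F"
    and s1: "sum l U = 1" and sp: "(\<Sum>u\<in>U. l u *\<^sub>R u) = p"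
  shows "p \<in> relint_K F (conv_K F U)"
proof -
  have pin: "p \<in> conv_K F U" unfolding conv_K_def using fin lpos lF s1 sp
    by (intro CollectI exI[of _ U] exI[of _ l]) (auto simp: less_imp_le)
  define m where "m = Min (l ` U)"
  have "m \<in> l ` U" unfolding m_def using fin ne by (intro Min_in) auto
  then have mpos: "m > 0" using lpos by auto
  have mle: "\<And>u. u \<in> U \<Longrightarrow> m \<le> l u" unfolding m_def using fin by auto
  define N where "N = nat \<lceil>1 / m\<rceil> + 2"
  define t where "t = 1 / real N"
  have N1: "real N \<ge> 1 / m" unfolding N_def by linarith
  have N2: "real N \<ge> 2" unfolding N_def by simp
  have tF: "t \<in> F" unfolding t_def using F by (intro rsf_divide rsf_nat) (auto simp: real_subfield_def)
  have t0: "0 < t" "t < 1" unfolding t_def using N2 by auto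
  have "1 \<le> real N * m" using N1 mpos by (simp add: divide_le_eq)
  then have tm: "t \<le> m" unfolding t_def using N2 by (simp add: divide_le_eq mult.commute)
  have "\<forall>y\<in>conv_K F U. \<exists>z\<in>conv_K F U. \<exists>t\<in>F. 0 < t \<and> t < 1 \<and> p = t *\<^sub>R y + (1 - t) *\<^sub>R z"
  proof
    fix y assume "y \<in> conv_K F U"
    then obtain S2 r where S2: "finite S2" "S2 \<subseteq> U" "\<forall>s\<in>S2. r s \<in> F \<and> 0 \<le> r s" "sum r S2 = 1"
      "(\<Sum>s\<in>S2. r s *\<^sub>R s) = y" unfolding conv_K_def by blast
    define r' where "r' = (\<lambda>s. if s \<in> S2 then r s else 0)"
    have r'1: "sum r' U = 1"
    proof -
      have "sum r' U = sum r' S2"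
        by (rule sum.mono_neutral_right) (use fin S2 in \<open>auto simp: r'_def\<close>)
      then show ?thesis using S2(4) by (simp add: r'_def)
    qed
    have r'y: "(\<Sum>s\<in>U. r' s *\<^sub>R s) = y"
    proof -
      have "(\<Sum>s\<in>U. r' s *\<^sub>R s) = (\<Sum>s\<in>S2. r' s *\<^sub>R s)"
        by (rule sum.mono_neutral_right) (use fin S2 in \<open>auto simp: r'_def\<close>)
      then show ?thesis using S2(5) by (simp add: r'_def)
    qed
    have r'nn: "\<forall>s\<in>U. 0 \<le> r' s \<and> r' s \<in> F" using S2(3) F by (auto simp: r'_def real_subfield_def)
    have r'le: "\<forall>s\<in>U. r' s \<le> 1"
    proof
      fix s assume "s \<in> U"
      then have "r' s \<le> sum r' U" using fin r'nn by (intro member_le_sum) auto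
      then show "r' s \<le> 1" using r'1 by simp
    qed
    define c where "c = (\<lambda>s. (l s - t * r' s) / (1 - t))"
    define z where "z = (\<Sum>s\<in>U. c s *\<^sub>R s)"
    have cnn: "\<forall>s\<in>U. 0 \<le> c s"
    proof
      fix s assume s: "s \<in> U"
      have "t * r' s \<le> t" using r'le r'nn s t0 by (simp add: mult_left_le)
      also have "\<dots> \<le> l s" using tm mle[OF s] by simp
      finally show "0 \<le> c s" unfolding c_def using t0 by simp
    qed
    have cF: "\<forall>s\<in>U. c s \<in> F" unfolding c_def using lF r'nn tF F
      by (auto intro!: rsf_divide rsf_diff rsf_mult simp: real_subfield_def)
    have c1: "sum c U = 1"
    proof -
      have "sum c U = (sum l U - t * sum r' U) / (1 - t)"
        unfolding c_def by (simp add: sum_divide_distrib[symmetric] sum_subtractf sum_distrib_left)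
      then show ?thesis using s1 r'1 t0 by simp
    qed
    have zin: "z \<in> conv_K F U" unfolding conv_K_def z_def using fin cnn cF c1
      by (intro CollectI exI[of _ U] exI[of _ c]) auto
    have "(1 - t) *\<^sub>R z = (\<Sum>s\<in>U. (l s - t * r' s) *\<^sub>R s)"
      unfolding z_def c_def using t0 by (simp add: scaleR_right.sum)
    also have "\<dots> = p - t *\<^sub>R y"
    proof -
      have "(\<Sum>s\<in>U. (t * r' s) *\<^sub>R s) = t *\<^sub>R (\<Sum>s\<in>U. r' s *\<^sub>R s)"
        by (simp add: scaleR_right.sum)
      then show ?thesis using sp r'y by (simp add: scaleR_diff_left sum_subtractf)
    qed
    finally have "p = t *\<^sub>R y + (1 - t) *\<^sub>R z" by simp
    then show "\<exists>z\<in>conv_K F U. \<exists>t\<in>F. 0 < t \<and> t < 1 \<and> p = t *\<^sub>R y + (1 - t) *\<^sub>R z"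
      using zin tF t0 by blast
  qed
  then show ?thesis using pin unfolding relint_K_def by blast
qed

lemma F_coeffs:
  fixes U :: "(real ^ 'n) set"
  assumes F: "real_subfield F" and UF: "\<forall>u\<in>U. \<forall>i. u $ i \<in> F" and pF: "\<forall>i. p $ i \<in> F"
    and ind: "\<not> affine_dependent U" and fin: "finite U"
    and s1: "sum l U = 1" and sp: "(\<Sum>u\<in>U. l u *\<^sub>R u) = p"
  shows "\<forall>u\<in>U. l u \<in> F"
proof -
  define E :: "((real ^ 'n \<Rightarrow> real) \<times> real) set"
    where "E = insert (\<lambda>_. 1, 1) ((\<lambda>i. (\<lambda>u. u $ i, p $ i)) ` UNIV)"
  have coef: "\<forall>(a,b)\<in>E. b \<in> F \<and> (\<forall>k\<in>U. a k \<in> F)"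
  proof -
    have "b \<in> F \<and> (\<forall>k\<in>U. a k \<in> F)" if ab: "(a,b) \<in> E" for a b
    proof -
      have "(a,b) = (\<lambda>_. 1, 1) \<or> (\<exists>i. (a,b) = (\<lambda>u. u $ i, p $ i))" using ab unfolding E_def by blast
      then show ?thesis
      proof
        assume "(a,b) = (\<lambda>_. 1, 1)" then show ?thesis using rsf_one[OF F] by simp
      next
        assume "\<exists>i. (a,b) = (\<lambda>u. u $ i, p $ i)"
        then obtain i where "a = (\<lambda>u. u $ i)" "b = p $ i" by blast
        then show ?thesis using UF pF by simp
      qed
    qed
    then show ?thesis by clarsimp
  qed
  have sol: "\<forall>(a,b)\<in>E. (\<Sum>k\<in>U. a k * l k) = b"
  proof -
    have "\<forall>i. (\<Sum>k\<in>U. k $ i * l k) = p $ i"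
    proof
      fix i
      have "p $ i = (\<Sum>k\<in>U. l k * k $ i)" using sp[symmetric] by simp
      then show "(\<Sum>k\<in>U. k $ i * l k) = p $ i" by (simp add: mult.commute)
    qed
    then have "(\<Sum>k\<in>U. a k * l k) = b" if ab: "(a,b) \<in> E" for a b
      using ab s1 unfolding E_def by auto
    then show ?thesis by clarsimp
  qed
  have uniq: "\<forall>m. (\<forall>(a,b)\<in>E. (\<Sum>k\<in>U. a k * m k) = b) \<longrightarrow> (\<forall>k\<in>U. m k = l k)"
  proof (intro allI impI)
    fix m assume m: "\<forall>(a,b)\<in>E. (\<Sum>k\<in>U. a k * m k) = b"
    have "(\<lambda>_. 1, 1) \<in> E" unfolding E_def by simp
    then have m1: "sum m U = 1" using m by fastforce
    have mi: "(\<Sum>k\<in>U. k $ i * m k) = p $ i" for i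
    proof -
      have "(\<lambda>u. u $ i, p $ i) \<in> E" unfolding E_def by simp
      then show ?thesis using m by fastforce
    qed
    have mp: "(\<Sum>u\<in>U. m u *\<^sub>R u) = p"
    proof (rule vec_eq_iff[THEN iffD2], rule allI)
      fix i show "(\<Sum>u\<in>U. m u *\<^sub>R u) $ i = p $ i" using mi[of i] by (simp add: mult.commute)
    qed
    define d where "d = (\<lambda>u. m u - l u)"
    have "sum d U = 0" using m1 s1 by (simp add: d_def sum_subtractf)
    moreover have "(\<Sum>u\<in>U. d u *\<^sub>R u) = 0" using mp sp by (simp add: d_def scaleR_diff_left sum_subtractf)
    ultimately have "\<not> (\<exists>v\<in>U. d v \<noteq> 0)" using ind affine_dependent_explicit_finite[OF fin] by blast
    then show "\<forall>k\<in>U. m k = l k" by (simp add: d_def)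
  qed
  show ?thesis by (rule elim_unique[of F U E l]) (fact F fin coef sol uniq)+
qed

lemma face_hull:
  fixes X :: "'a::real_inner set"
  assumes "poly_face (convex hull X) Fc"
  shows "convex hull (Fc \<inter> X) = Fc"
  using assms unfolding poly_face_def
proof (elim disjE exE conjE)
  assume "Fc = convex hull X"
  have h0: "convex hull X \<inter> X = X" using hull_subset[of X convex] by blast
  have h: "Fc \<inter> X = X" unfolding \<open>Fc = convex hull X\<close> by (rule h0)
  show ?thesis unfolding h using \<open>Fc = convex hull X\<close> by (rule sym)
next
  fix v w
  assume C: "convex hull X \<subseteq> {u. 0 \<le> v \<bullet> (u - w)}" and Fc: "Fc = convex hull X \<inter> {u. v \<bullet> (u - w) = 0}"
  have cvx: "convex Fc" unfolding Fc
  proof (rule convex_Int)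
    have "{u. v \<bullet> (u - w) = 0} = {u. v \<bullet> u = v \<bullet> w}" by (auto simp: inner_diff_right)
    then show "convex {u. v \<bullet> (u - w) = 0}" using convex_hyperplane[of v "v \<bullet> w"] by simp
  next
    show "convex (convex hull X)" by (rule convex_convex_hull)
  qed
  have "convex hull (Fc \<inter> X) \<subseteq> Fc" by (rule hull_minimal[of _ _ convex, OF _ cvx]) blast
  moreover have "Fc \<subseteq> convex hull (Fc \<inter> X)"
  proof
    fix z assume z: "z \<in> Fc"
    then have "z \<in> convex hull X" using Fc by blast
    then have "\<exists>S u. finite S \<and> S \<subseteq> X \<and> (\<forall>x\<in>S. 0 \<le> u x) \<and> sum u S = 1 \<and> (\<Sum>y\<in>S. u y *\<^sub>R y) = z"
      unfolding convex_hull_explicit by (rule CollectD)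
    then obtain S u where S: "finite S" "S \<subseteq> X" "\<forall>x\<in>S. 0 \<le> u x" "sum u S = 1" "(\<Sum>y\<in>S. u y *\<^sub>R y) = z"
      by blast
    have gnn: "\<forall>s\<in>S. 0 \<le> u s * (v \<bullet> (s - w))"
    proof
      fix s assume s: "s \<in> S"
      then have "s \<in> convex hull X" using S(2) hull_subset[of X convex] by blast
      then have "0 \<le> v \<bullet> (s - w)" using C by blast
      moreover have "0 \<le> u s" using S(3) s by blast
      ultimately show "0 \<le> u s * (v \<bullet> (s - w))" by (rule mult_nonneg_nonneg[rotated])
    qed
    have "(\<Sum>s\<in>S. u s * (v \<bullet> (s - w))) = v \<bullet> (\<Sum>s\<in>S. u s *\<^sub>R (s - w))"
      by (simp add: inner_sum_right)
    also have "(\<Sum>s\<in>S. u s *\<^sub>R (s - w)) = (\<Sum>s\<in>S. u s *\<^sub>R s) - (\<Sum>s\<in>S. u s) *\<^sub>R w"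
      by (simp add: scaleR_diff_right sum_subtractf scaleR_left.sum)
    also have "\<dots> = z - w" using S(4,5) by simp
    also have "v \<bullet> (z - w) = 0" using z unfolding Fc by (rule IntD2[THEN CollectD])
    finally have "(\<Sum>s\<in>S. u s * (v \<bullet> (s - w))) = 0" .
    moreover have "(\<Sum>s\<in>S. u s * (v \<bullet> (s - w))) = 0 \<longleftrightarrow> (\<forall>s\<in>S. u s * (v \<bullet> (s - w)) = 0)"
      by (rule sum_nonneg_eq_0_iff[OF S(1)]) (use gnn in blast)
    ultimately have "\<forall>s\<in>S. u s * (v \<bullet> (s - w)) = 0" by blast
    define S' where "S' = {s\<in>S. 0 < u s}"
    have S'F: "S' \<subseteq> Fc \<inter> X"
    proof
      fix s assume "s \<in> S'"
      then have s: "s \<in> S" "0 < u s" by (auto simp: S'_def)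
      then have "v \<bullet> (s - w) = 0" using \<open>\<forall>s\<in>S. u s * (v \<bullet> (s - w)) = 0\<close> by auto
      moreover have "s \<in> convex hull X" using s S(2) hull_subset[of X convex] by blast
      ultimately show "s \<in> Fc \<inter> X" unfolding Fc using s(1) S(2) by blast
    qed
    have z0: "\<forall>s\<in>S - S'. u s = 0" using S(3) by (auto simp: S'_def)
    have S'S: "S' \<subseteq> S" by (auto simp: S'_def)
    have "sum u S' = sum u S"
      by (rule sum.mono_neutral_left[OF S(1) S'S z0])
    moreover have "\<forall>s\<in>S - S'. u s *\<^sub>R s = 0" using z0 by simp
    then have "(\<Sum>s\<in>S'. u s *\<^sub>R s) = (\<Sum>s\<in>S. u s *\<^sub>R s)"
      by (rule sum.mono_neutral_left[OF S(1) S'S])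
    moreover have "finite S'" using S(1) by (simp add: S'_def)
    moreover have "\<forall>x\<in>S'. 0 \<le> u x" by (simp add: S'_def)
    ultimately have "finite S' \<and> S' \<subseteq> Fc \<inter> X \<and> (\<forall>x\<in>S'. 0 \<le> u x) \<and> sum u S' = 1 \<and> (\<Sum>y\<in>S'. u y *\<^sub>R y) = z"
      using S(4,5) S'F by simp
    then show "z \<in> convex hull (Fc \<inter> X)" unfolding convex_hull_explicit by (intro CollectI exI)
  qed
  ultimately show ?thesis by blast
qed

lemma partB:
  fixes X :: "'a::real_inner set"
  assumes F: "real_subfield F" and pf: "poly_face (convex hull X) Fc" and Y: "Y = Fc \<inter> X"
  shows "weak_face F X Y"
  unfolding weak_face_def
proof (intro conjI allI impI)
  show "Y \<subseteq> X" using Y by blast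
  fix U assume UX: "U \<subseteq> X" and ne: "conv_K F Y \<inter> relint_K F (conv_K F U) \<noteq> {}"
  then obtain p where p: "p \<in> conv_K F Y" "p \<in> relint_K F (conv_K F U)" by blast
  show "U \<subseteq> Y" using pf unfolding poly_face_def
  proof (elim disjE exE conjE)
    assume "Fc = convex hull X" then show ?thesis using Y UX hull_subset[of X convex] by blast
  next
    fix v w
    assume C: "convex hull X \<subseteq> {u. 0 \<le> v \<bullet> (u - w)}" and Fc: "Fc = convex hull X \<inter> {u. v \<bullet> (u - w) = 0}"
    have "p \<in> convex hull Y" using p(1) conv_K_sub by blast
    also have "convex hull Y = Fc" using face_hull[OF pf] Y by simp
    finally have pF: "v \<bullet> (p - w) = 0" using Fc by blast
    show "U \<subseteq> Y"
    proof
      fix x assume xU: "x \<in> U"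
      have one: "1 \<in> F" using F by (rule rsf_one)
      have "x \<in> conv_K F U" using conv_K_single[OF one xU] .
      then obtain z t where zt: "z \<in> conv_K F U" "0 < t" "t < 1" "p = t *\<^sub>R x + (1 - t) *\<^sub>R z"
        using p(2) unfolding relint_K_def by blast
      have "z \<in> convex hull U" using zt(1) conv_K_sub by blast
      then have zC: "z \<in> convex hull X" using hull_mono[OF UX] by blast
      have xC: "x \<in> convex hull X" using xU UX hull_subset[of X convex] by blast
      have gz: "0 \<le> v \<bullet> (z - w)" and gx: "0 \<le> v \<bullet> (x - w)" using C zC xC by auto
      have "p - w = t *\<^sub>R (x - w) + (1 - t) *\<^sub>R (z - w)" using zt(4) by (simp add: algebra_simps)
      then have "t * (v \<bullet> (x - w)) + (1 - t) * (v \<bullet> (z - w)) = 0" using pF by (simp add: inner_add_right)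
      then have "v \<bullet> (x - w) = 0" using gz gx zt(2,3)
        by (smt (verit, best) mult_nonneg_nonneg mult_pos_pos)
      then have "x \<in> Fc" using Fc xC by blast
      then show "x \<in> Y" using Y xU UX by blast
    qed
  qed
qed

lemma partC:
  fixes F :: "real set" and X Y :: "(real ^ 'n) set"
  assumes F: "real_subfield F" and XF: "\<forall>x\<in>X. \<forall>i. x $ i \<in> F"
    and poly: "polyhedron (convex hull X)"
    and Yne: "Y \<noteq> {}" and YX: "Y \<subseteq> X" and wf: "weak_face F X Y"
  shows "\<exists>Fc. poly_face (convex hull X) Fc \<and> Y = Fc \<inter> X"
proof -
  obtain B where B: "B \<subseteq> Y" "\<not> affine_dependent B" "affine hull Y = affine hull B"
    using affine_basis_exists[of Y] by blast
  have finB: "finite B" using aff_independent_finite[OF B(2)] .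
  have Bne: "B \<noteq> {}"
  proof
    assume "B = {}"
    then have "affine hull Y = {}" using B(3) by simp
    then show False using Yne hull_subset[of Y affine] by blast
  qed
  define k where "k = real (card B)"
  have kpos: "k > 0" using finB Bne by (simp add: k_def card_gt_0_iff)
  define p where "p = (\<Sum>b\<in>B. (1/k) *\<^sub>R b)"
  have kF: "1/k \<in> F" unfolding k_def using F by (intro rsf_divide rsf_one rsf_nat)
  have sumB: "sum (\<lambda>_. 1/k) B = 1" using kpos by (simp add: k_def)
  have pconvF: "p \<in> conv_K F Y"
  proof -
    have "finite B \<and> B \<subseteq> Y \<and> (\<forall>s\<in>B. 1/k \<in> F \<and> 0 \<le> 1/k) \<and> sum (\<lambda>_. 1/k) B = 1 \<and> (\<Sum>s\<in>B. (1/k) *\<^sub>R s) = p"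
      using finB B(1) kF kpos sumB Bne by (simp add: p_def)
    then show ?thesis unfolding conv_K_def by (intro CollectI exI)
  qed
  have pF: "\<forall>i. p $ i \<in> F"
  proof
    fix i
    have "p $ i = (\<Sum>b\<in>B. (1/k) * b $ i)" by (simp add: p_def)
    moreover have "\<forall>b\<in>B. (1/k) * b $ i \<in> F"
    proof
      fix b assume "b \<in> B"
      then have "b $ i \<in> F" using B(1) YX XF by blast
      then show "(1/k) * b $ i \<in> F" using rsf_mult[OF F kF] by blast
    qed
    ultimately show "p $ i \<in> F" using rsf_sum[OF F] by metis
  qed
  have prelB: "p \<in> rel_interior (convex hull B)"
  proof -
    have "(\<forall>x\<in>B. 0 < 1/k) \<and> sum (\<lambda>_. 1/k) B = 1 \<and> (\<Sum>x\<in>B. (1/k) *\<^sub>R x) = p"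
      using kpos sumB by (simp add: p_def)
    then show ?thesis unfolding rel_interior_convex_hull_explicit[OF B(2)] by (intro CollectI exI)
  qed
  have "rel_interior (convex hull B) \<subseteq> rel_interior (convex hull Y)"
    by (rule subset_rel_interior) (use hull_mono[OF B(1)] B(3) in auto)
  then have prel: "p \<in> rel_interior (convex hull Y)" using prelB by blast
  have cvY: "convex hull Y \<subseteq> convex hull X" by (rule hull_mono[OF YX])
  have pC: "p \<in> convex hull X" using prel rel_interior_subset cvY by blast
  obtain H where H: "finite H" "convex hull X = \<Inter>H" "\<forall>h\<in>H. \<exists>a b. a \<noteq> 0 \<and> h = {x. a \<bullet> x \<le> b}"
    using poly unfolding polyhedron_def by auto
  have "\<forall>h\<in>H. \<exists>ab. \<forall>x. x \<in> h \<longleftrightarrow> fst ab \<bullet> x \<le> snd ab"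
  proof
    fix h assume "h \<in> H"
    then obtain a b where "h = {x. a \<bullet> x \<le> b}" using H(3) by blast
    then show "\<exists>ab. \<forall>x. x \<in> h \<longleftrightarrow> fst ab \<bullet> x \<le> snd ab" by (intro exI[of _ "(a,b)"]) simp
  qed
  then obtain f where f: "\<forall>h\<in>H. \<forall>x. x \<in> h \<longleftrightarrow> fst (f h) \<bullet> x \<le> snd (f h)"
    by (rule bchoice[THEN exE]) blast
  define A where "A = (\<lambda>h. fst (f h))"
  define Bf where "Bf = (\<lambda>h. snd (f h))"
  have Cchar: "x \<in> convex hull X \<longleftrightarrow> (\<forall>h\<in>H. A h \<bullet> x \<le> Bf h)" for x
    using f unfolding H(2) A_def Bf_def by auto
  define I where "I = {h\<in>H. A h \<bullet> p = Bf h}"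
  have finI: "finite I" using H(1) by (simp add: I_def)
  define v where "v = - (\<Sum>h\<in>I. A h)"
  define Fc where "Fc = convex hull X \<inter> {u. v \<bullet> (u - p) = 0}"
  have key: "v \<bullet> (u - p) = (\<Sum>h\<in>I. Bf h - A h \<bullet> u)" for u
  proof -
    have "v \<bullet> (u - p) = - (\<Sum>h\<in>I. A h \<bullet> u - A h \<bullet> p)"
      by (simp add: v_def inner_sum_left inner_diff_right sum_subtractf)
    also have "\<dots> = (\<Sum>h\<in>I. A h \<bullet> p - A h \<bullet> u)"
      by (simp add: sum_negf[symmetric])
    also have "\<dots> = (\<Sum>h\<in>I. Bf h - A h \<bullet> u)"
      by (rule sum.cong) (auto simp: I_def)
    finally show ?thesis .
  qed
  have Fchar: "u \<in> Fc \<longleftrightarrow> u \<in> convex hull X \<and> (\<forall>h\<in>I. A h \<bullet> u = Bf h)" for u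
  proof (cases "u \<in> convex hull X")
    case True
    then have nn: "\<forall>h\<in>I. 0 \<le> Bf h - A h \<bullet> u" using Cchar by (auto simp: I_def)
    have "(\<Sum>h\<in>I. Bf h - A h \<bullet> u) = 0 \<longleftrightarrow> (\<forall>h\<in>I. Bf h - A h \<bullet> u = 0)"
      by (rule sum_nonneg_eq_0_iff[OF finI]) (use nn in blast)
    then show ?thesis using True key[of u] by (auto simp: Fc_def)
  next
    case False then show ?thesis by (simp add: Fc_def)
  qed
  have pFc: "p \<in> Fc" using pC Fchar I_def by auto
  have CH: "convex hull X \<subseteq> {u. 0 \<le> v \<bullet> (u - p)}"
  proof
    fix u assume u: "u \<in> convex hull X"
    then have "\<forall>h\<in>I. 0 \<le> Bf h - A h \<bullet> u" using Cchar by (auto simp: I_def)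
    then have "0 \<le> (\<Sum>h\<in>I. Bf h - A h \<bullet> u)" by (intro sum_nonneg) blast
    then show "u \<in> {u. 0 \<le> v \<bullet> (u - p)}" using key[of u] by simp
  qed
  have pf: "poly_face (convex hull X) Fc"
    unfolding poly_face_def using CH pFc by (intro disjI2 exI[of _ v] exI[of _ p]) (auto simp: Fc_def)
  have YFc: "Y \<subseteq> Fc"
  proof
    fix y assume yY: "y \<in> Y"
    have yC: "y \<in> convex hull X" using yY YX hull_subset[of X convex] by blast
    have cY: "convex (convex hull Y)" by (rule convex_convex_hull)
    have neY: "convex hull Y \<noteq> {}" using Yne by simp
    have yhY: "y \<in> convex hull Y" using yY hull_subset[of Y convex] by blast
    obtain e where e: "e > 1" "(1 - e) *\<^sub>R y + e *\<^sub>R p \<in> convex hull Y"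
      using iffD1[OF convex_rel_interior_iff[OF cY neY] prel] yhY by blast
    define q where "q = (1 - e) *\<^sub>R y + e *\<^sub>R p"
    have qC: "q \<in> convex hull X" using e(2) cvY q_def by blast
    have "\<forall>h\<in>I. A h \<bullet> y = Bf h"
    proof
      fix h assume hI: "h \<in> I"
      then have hH: "h \<in> H" and hp: "A h \<bullet> p = Bf h" by (auto simp: I_def)
      have a1: "A h \<bullet> y \<le> Bf h" using yC hH Cchar by blast
      have a2: "A h \<bullet> q \<le> Bf h" using qC hH Cchar by blast
      have "A h \<bullet> q = (1 - e) * (A h \<bullet> y) + e * Bf h" using hp by (simp add: q_def inner_add_right)
      then have "(e - 1) * (Bf h - A h \<bullet> y) \<le> 0" using a2 by (simp add: algebra_simps)
      then have "Bf h - A h \<bullet> y \<le> 0" using e(1) by (simp add: mult_le_0_iff)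
      then show "A h \<bullet> y = Bf h" using a1 by simp
    qed
    then show "y \<in> Fc" using Fchar yC by blast
  qed
  have FcY: "Fc \<inter> X \<subseteq> Y"
  proof
    fix x assume xFX: "x \<in> Fc \<inter> X"
    then have xX: "x \<in> X" and xFc: "x \<in> Fc" by auto
    have xI: "\<forall>h\<in>I. A h \<bullet> x = Bf h" using xFc Fchar by blast
    define J where "J = H - I"
    have finJ: "finite J" using H(1) by (simp add: J_def)
    have pJ: "\<forall>h\<in>J. A h \<bullet> p < Bf h"
    proof
      fix h assume "h \<in> J"
      then have "h \<in> H" "A h \<bullet> p \<noteq> Bf h" by (auto simp: J_def I_def)
      moreover have "A h \<bullet> p \<le> Bf h" using pC \<open>h \<in> H\<close> Cchar by blast
      ultimately show "A h \<bullet> p < Bf h" by simp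
    qed
    define dh where "dh = (\<lambda>h. (Bf h - A h \<bullet> p) / (\<bar>A h \<bullet> (p - x)\<bar> + 1))"
    define \<delta> where "\<delta> = Min (insert 1 (dh ` J))"
    have dpos: "\<delta> > 0"
    proof -
      have "\<forall>a\<in>insert 1 (dh ` J). 0 < a"
      proof
        fix a assume "a \<in> insert 1 (dh ` J)"
        then consider "a = 1" | h where "h \<in> J" "a = dh h" by blast
        then show "0 < a"
        proof cases
          case 1 then show ?thesis by simp
        next
          case 2
          have "0 < Bf h - A h \<bullet> p" using pJ 2(1) by auto
          moreover have "0 < \<bar>A h \<bullet> (p - x)\<bar> + 1" by simp
          ultimately show ?thesis using 2(2) by (simp add: dh_def)
        qed
      qed
      then show ?thesis unfolding \<delta>_def using finJ by (subst Min_gr_iff) auto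
    qed
    have dle: "\<delta> \<le> dh h" if "h \<in> J" for h
      unfolding \<delta>_def using finJ that by (intro Min_le) auto
    define q where "q = p + \<delta> *\<^sub>R (p - x)"
    have qC: "q \<in> convex hull X"
      unfolding Cchar
    proof
      fix h assume hH: "h \<in> H"
      show "A h \<bullet> q \<le> Bf h"
      proof (cases "h \<in> I")
        case True
        then have "A h \<bullet> p = Bf h" by (simp add: I_def)
        moreover have "A h \<bullet> x = Bf h" using xI True by blast
        ultimately show ?thesis by (simp add: q_def inner_add_right inner_diff_right)
      next
        case False
        then have hJ: "h \<in> J" using hH by (simp add: J_def)
        define c where "c = A h \<bullet> (p - x)"
        have "A h \<bullet> q = A h \<bullet> p + \<delta> * c" by (simp add: q_def c_def inner_add_right)
        also have "\<delta> * c \<le> \<delta> * (\<bar>c\<bar> + 1)" using dpos by (intro mult_left_mono) auto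
        also have "\<delta> * (\<bar>c\<bar> + 1) \<le> dh h * (\<bar>c\<bar> + 1)" using dle[OF hJ] by (intro mult_right_mono) auto
        also have "dh h * (\<bar>c\<bar> + 1) = Bf h - A h \<bullet> p"
        proof -
          have "\<bar>c\<bar> + 1 \<noteq> 0" using abs_ge_zero[of c] by linarith
          then show ?thesis by (simp add: dh_def c_def)
        qed
        finally show ?thesis by simp
      qed
    qed
    have "\<exists>S u. finite S \<and> S \<subseteq> X \<and> (\<forall>x\<in>S. 0 \<le> u x) \<and> sum u S = 1 \<and> (\<Sum>y\<in>S. u y *\<^sub>R y) = q"
      using qC unfolding convex_hull_explicit by (rule CollectD)
    then obtain S \<mu> where S: "finite S" "S \<subseteq> X" "\<forall>x\<in>S. 0 \<le> \<mu> x" "sum \<mu> S = 1" "(\<Sum>y\<in>S. \<mu> y *\<^sub>R y) = q"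
      by blast
    define T0 where "T0 = insert x S"
    define \<mu>' where "\<mu>' = (\<lambda>s. if s \<in> S then \<mu> s else 0)"
    define l0 where "l0 = (\<lambda>s. (1 / (1 + \<delta>)) * \<mu>' s + (if s = x then \<delta> / (1 + \<delta>) else 0))"
    have finT0: "finite T0" using S(1) by (simp add: T0_def)
    have ST0: "S \<subseteq> T0" by (auto simp: T0_def)
    have xT0: "x \<in> T0" by (simp add: T0_def)
    have mu0: "\<forall>s\<in>T0 - S. \<mu>' s = 0" by (simp add: \<mu>'_def)
    have "sum \<mu>' T0 = sum \<mu>' S" by (rule sum.mono_neutral_right[OF finT0 ST0 mu0])
    then have smu: "sum \<mu>' T0 = 1" using S(4) by (simp add: \<mu>'_def)
    have mu0v: "\<forall>s\<in>T0 - S. \<mu>' s *\<^sub>R s = 0" using mu0 by simp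
    have "(\<Sum>s\<in>T0. \<mu>' s *\<^sub>R s) = (\<Sum>s\<in>S. \<mu>' s *\<^sub>R s)" by (rule sum.mono_neutral_right[OF finT0 ST0 mu0v])
    then have vmu: "(\<Sum>s\<in>T0. \<mu>' s *\<^sub>R s) = q" using S(5) by (simp add: \<mu>'_def)
    have sl0: "sum l0 T0 = 1"
    proof -
      have "sum l0 T0 = (1 / (1 + \<delta>)) * sum \<mu>' T0 + \<delta> / (1 + \<delta>)"
        unfolding l0_def using finT0 xT0 by (simp add: sum.distrib sum_distrib_left)
      also have "\<dots> = 1" using smu dpos by (simp add: field_simps)
      finally show ?thesis .
    qed
    have vl0: "(\<Sum>s\<in>T0. l0 s *\<^sub>R s) = p"
    proof -
      have "(\<Sum>s\<in>T0. l0 s *\<^sub>R s) = (1 / (1 + \<delta>)) *\<^sub>R (\<Sum>s\<in>T0. \<mu>' s *\<^sub>R s) + (\<delta> / (1 + \<delta>)) *\<^sub>R x"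
        unfolding l0_def using finT0 xT0
        by (simp add: scaleR_add_left sum.distrib scaleR_right.sum if_distrib[of "\<lambda>c. c *\<^sub>R _"] cong: if_cong)
      also have "\<dots> = (1 / (1 + \<delta>)) *\<^sub>R (q + \<delta> *\<^sub>R x)" using vmu by (simp add: scaleR_add_right)
      also have "q + \<delta> *\<^sub>R x = (1 + \<delta>) *\<^sub>R p" by (simp add: q_def algebra_simps)
      also have "(1 / (1 + \<delta>)) *\<^sub>R ((1 + \<delta>) *\<^sub>R p) = p" using dpos by simp
      finally show ?thesis .
    qed
    have l0nn: "\<forall>s\<in>T0. 0 \<le> l0 s" using S(3) dpos by (auto simp: l0_def \<mu>'_def)
    have l0x: "0 < l0 x"
    proof -
      have "0 \<le> \<mu>' x" using S(3) by (simp add: \<mu>'_def)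
      moreover have "0 < \<delta> / (1 + \<delta>)" using dpos by simp
      moreover have "0 \<le> \<mu>' x / (1 + \<delta>)" using \<open>0 \<le> \<mu>' x\<close> dpos by simp
      ultimately show ?thesis by (simp add: l0_def)
    qed
    define T where "T = {s\<in>T0. 0 < l0 s}"
    have TT0: "T \<subseteq> T0" by (auto simp: T_def)
    have finT: "finite T" using finT0 TT0 finite_subset by blast
    have xT: "x \<in> T" using xT0 l0x by (simp add: T_def)
    have z0: "\<forall>s\<in>T0 - T. l0 s = 0" using l0nn by (auto simp: T_def)
    have z0v: "\<forall>s\<in>T0 - T. l0 s *\<^sub>R s = 0" using z0 by simp
    have sT: "sum l0 T = 1" using sum.mono_neutral_left[OF finT0 TT0 z0] sl0 by simp
    have vT: "(\<Sum>s\<in>T. l0 s *\<^sub>R s) = p" using sum.mono_neutral_left[OF finT0 TT0 z0v] vl0 by simp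
    have posT: "\<forall>s\<in>T. 0 < l0 s" by (simp add: T_def)
    obtain U l' where U: "U \<subseteq> T" "x \<in> U" "\<not> affine_dependent U" "\<forall>u\<in>U. 0 < l' u"
        "sum l' U = 1" "(\<Sum>u\<in>U. l' u *\<^sub>R u) = p"
      using reduce_aff[OF finT xT posT sT vT] by blast
    have UX: "U \<subseteq> X" using U(1) TT0 S(2) xX by (auto simp: T0_def)
    have finU: "finite U" using finT U(1) finite_subset by blast
    have UF: "\<forall>u\<in>U. \<forall>i. u $ i \<in> F" using UX XF by blast
    have lF: "\<forall>u\<in>U. l' u \<in> F" by (rule F_coeffs[OF F UF pF U(3) finU U(5) U(6)])
    have Une: "U \<noteq> {}" using U(2) by blast
    have prU: "p \<in> relint_K F (conv_K F U)" by (rule relint_lemma[OF F finU Une U(4) lF U(5) U(6)])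
    have "conv_K F Y \<inter> relint_K F (conv_K F U) \<noteq> {}" using pconvF prU by blast
    then have "U \<subseteq> Y" using wf UX unfolding weak_face_def by blast
    then show "x \<in> Y" using U(2) by blast
  qed
  have "Y = Fc \<inter> X" using YFc FcY YX by blast
  then show ?thesis using pf by blast
qed

theorem theorem4p4:
  fixes F :: "real set" and X Y :: "(real ^ 'n) set"
  assumes "real_subfield F"
    and "X \<noteq> {}"
    and "\<forall>x\<in>X. \<forall>i. x $ i \<in> F"
    and "polyhedron (convex hull X)"
    and "Y \<noteq> {}" and "Y \<subseteq> X"
  shows "(weak_face F X Y \<longleftrightarrow> (\<exists>Fc. poly_face (convex hull X) Fc \<and> Y = Fc \<inter> X)) \<and>
         (\<forall>Fc. poly_face (convex hull X) Fc \<and> Y = Fc \<inter> X \<longrightarrow> convex hull Y = Fc)"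
proof (intro conjI allI impI iffI)
  assume "weak_face F X Y"
  then show "\<exists>Fc. poly_face (convex hull X) Fc \<and> Y = Fc \<inter> X"
    using partC[OF assms(1) assms(3) assms(4) assms(5) assms(6)] by blast
next
  assume "\<exists>Fc. poly_face (convex hull X) Fc \<and> Y = Fc \<inter> X"
  then obtain Fc where "poly_face (convex hull X) Fc" "Y = Fc \<inter> X" by blast
  then show "weak_face F X Y" using partB[OF assms(1)] by blast
next
  fix Fc assume "poly_face (convex hull X) Fc \<and> Y = Fc \<inter> X"
  then show "convex hull Y = Fc" using face_hull[of X Fc] by simp
qed

end
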